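(* Let $\mathcal{G}$ be a connected, homogeneous, bidirected coupled cell network with cell set $\mathcal{C}=\{1,\dots,n\}$ and edge set $\mathcal{E}$, each cell having phase space $\mathbb{R}$. Let $f:\mathbb{R}^n\to\mathbb{R}^n$ be the $\mathcal{G}$-admissible vector field with components \[ f_c(x)=\sum_{d\in I(c)}\phi_{[(c,d)]}(x_d-x_c),\qquad c\in\mathcal{C}, \] where for each edge type $\xi$, $\phi_\xi:\mathbb{R}\to\mathbb{R}$ is an odd $C^1$ function. Suppose there exists $\varepsilon>0$ such that $\alpha\,\phi_\xi(\alpha)>0$ for all $\alpha\in(-\varepsilon,\varepsilon)\setminus\{0\}$ and all edge types $\xi$. Let $\Delta=\{x\in\mathbb{R}^n: x_1=\dots=x_n\}$ be the total synchrony subspace and let $\Omega=\{x\in\mathbb{R}^n:\operatorname{dist}(x,\Delta)<r\}$ be the largest open hypercylinder around $\Delta$ such that $x\in\Omega$ implies $|x_d-x_c|<\varepsilon$ for all $(c,d)\in\mathcal{E}$. Then, for the system $\dot x=f(x)$, the total synchrony subspace $\Delta$ (which consists of equilibria) is asymptotically stable on $\Omega$ in the sense of Lyapunov.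
   Context: A coupled cell network consists of cells $\mathcal{C}=\{1,\dots,n\}$, edges $\mathcal{E}\subset\mathcal{C}\times\mathcal{C}$ without loops, and an equivalence relation on edges (edge types; $[e]$ is the type of $e$) compatible with an equivalence relation on cells. The input set of $c$ is the set of edges $(d,c)\in\mathcal{E}$; one writes $d\in I(c)$ when $(d,c)\in\mathcal{E}$. Cells $c,d$ are input equivalent if there is an edge-type preserving bijection between their input sets; the network is homogeneous if all cells are input equivalent. It is bidirected if $(i,j)\in\mathcal{E}$ iff $(j,i)\in\mathcal{E}$, with $(i,j)$ and $(j,i)$ of the same type. Connected means the underlying graph is connected. Admissible maps have components depending only on the cell's own variable and its inputs, with identical functional form across input-equivalent cells, edges of the same type being treated identically. *)

theory Defs
  imports "HOL-Analysis.Analysis"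
begin

(* Edges E :: ('n * 'n) set, an edge (d,c) goes from d to c, i.e. it is an input edge of c. *)

definition input_set :: "('n \<times> 'n) set \<Rightarrow> 'n \<Rightarrow> ('n \<times> 'n) set" where
  "input_set E c = {e \<in> E. snd e = c}"

definition no_loops :: "('n \<times> 'n) set \<Rightarrow> bool" where
  "no_loops E \<longleftrightarrow> (\<forall>c. (c, c) \<notin> E)"

definition input_equivalent :: "('n \<times> 'n) set \<Rightarrow> ('n \<times> 'n \<Rightarrow> 't) \<Rightarrow> 'n \<Rightarrow> 'n \<Rightarrow> bool" where
  "input_equivalent E ty c d \<longleftrightarrow>
     (\<exists>\<beta>. bij_betw \<beta> (input_set E c) (input_set E d) \<and> (\<forall>e\<in>input_set E c. ty (\<beta> e) = ty e))"

definition homogeneous :: "('n \<times> 'n) set \<Rightarrow> ('n \<times> 'n \<Rightarrow> 't) \<Rightarrow> bool" where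
  "homogeneous E ty \<longleftrightarrow> (\<forall>c d. input_equivalent E ty c d)"

definition bidirected :: "('n \<times> 'n) set \<Rightarrow> ('n \<times> 'n \<Rightarrow> 't) \<Rightarrow> bool" where
  "bidirected E ty \<longleftrightarrow> (\<forall>i j. (i, j) \<in> E \<longleftrightarrow> (j, i) \<in> E) \<and> (\<forall>i j. (i, j) \<in> E \<longrightarrow> ty (i, j) = ty (j, i))"

definition connected_network :: "('n \<times> 'n) set \<Rightarrow> bool" where
  "connected_network E \<longleftrightarrow> (\<forall>c d. (c, d) \<in> (E \<union> E\<inverse>)\<^sup>*)"

definition diff_field :: "('n::finite \<times> 'n) set \<Rightarrow> ('n \<times> 'n \<Rightarrow> 't) \<Rightarrow> ('t \<Rightarrow> real \<Rightarrow> real)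
    \<Rightarrow> real^'n \<Rightarrow> real^'n" where
  "diff_field E ty \<phi> x = (\<chi> c. \<Sum>d\<in>{d. (d, c) \<in> E}. \<phi> (ty (c, d)) (x $ d - x $ c))"

definition sync_space :: "(real^'n) set" where
  "sync_space = {x. \<forall>i j. x $ i = x $ j}"

definition cylinder :: "real \<Rightarrow> (real^'n) set" where
  "cylinder r = {x. infdist x sync_space < r}"

(* the largest open hypercylinder around Delta on which all coupled differences are < eps:
   union of all admissible cylinders (which is itself a cylinder, or the whole space) *)
definition max_cylinder :: "('n \<times> 'n) set \<Rightarrow> real \<Rightarrow> (real^'n) set" where
  "max_cylinder E \<epsilon> = \<Union>{cylinder r | r. r > 0 \<and>
       (\<forall>x\<in>cylinder r. \<forall>(c, d)\<in>E. \<bar>x $ d - x $ c\<bar> < \<epsilon>)}"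

definition is_solution :: "(real^'n \<Rightarrow> real^'n) \<Rightarrow> (real \<Rightarrow> real^'n) \<Rightarrow> bool" where
  "is_solution F x \<longleftrightarrow> (\<forall>t\<ge>0. (x has_vector_derivative F (x t)) (at t within {0..}))"

definition lyapunov_stable_set :: "('a::euclidean_space \<Rightarrow> 'a) \<Rightarrow> 'a set \<Rightarrow> bool" where
  "lyapunov_stable_set F A \<longleftrightarrow>
     (\<forall>e>0. \<exists>\<delta>>0. \<forall>x. (\<forall>t\<ge>0. (x has_vector_derivative F (x t)) (at t within {0..})) \<longrightarrow>
        infdist (x 0) A < \<delta> \<longrightarrow> (\<forall>t\<ge>0. infdist (x t) A < e))"

definition asymptotically_stable_on :: "('a::euclidean_space \<Rightarrow> 'a) \<Rightarrow> 'a set \<Rightarrow> 'a set \<Rightarrow> bool" where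
  "asymptotically_stable_on F A U \<longleftrightarrow>
     lyapunov_stable_set F A \<and>
     (\<forall>x. (\<forall>t\<ge>0. (x has_vector_derivative F (x t)) (at t within {0..})) \<longrightarrow> x 0 \<in> U \<longrightarrow>
        ((\<lambda>t. infdist (x t) A) \<longlongrightarrow> 0) at_top)"

end

theory Submission
  imports Defs
begin


lemma comp_deriv:
  fixes x :: "real \<Rightarrow> real^'n"
  assumes "(x has_vector_derivative v) (at t within S)"
  shows "((\<lambda>t. x t $ c) has_real_derivative (v $ c)) (at t within S)"
  using bounded_linear.has_vector_derivative[OF bounded_linear_vec_nth assms, of c]
  by (simp add: has_real_derivative_iff_has_vector_derivative)

lemma mvt_W:
  fixes h W :: "real \<Rightarrow> real"
  assumes "a \<le> b" "\<And>t. a \<le> t \<Longrightarrow> t \<le> b \<Longrightarrow> (h has_real_derivative - W t) (at t within {a..b})"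
  shows "\<exists>\<xi>\<in>{a..b}. h b - h a = - W \<xi> * (b - a)"
  using mvt_very_simple[of a b h "\<lambda>t. (*) (- W t)"] assms
  by (auto simp: has_field_derivative_def)

lemma mono_core:
  fixes h W :: "real \<Rightarrow> real"
  assumes d: "\<And>t. t \<ge> 0 \<Longrightarrow> (h has_real_derivative - W t) (at t within {0..})"
    and h0: "h 0 < R"
    and Wnn: "\<And>t. t \<ge> 0 \<Longrightarrow> h t < R \<Longrightarrow> 0 \<le> W t"
  shows "\<forall>t\<ge>0. h t < R"
proof (rule ccontr)
  assume "\<not> ?thesis"
  then obtain t1 where t1: "t1 \<ge> 0" "h t1 \<ge> R" by force
  define c where "c = (h 0 + R) / 2"
  have c: "h 0 < c" "c < R" using h0 by (auto simp: c_def)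
  have cont: "continuous_on {0..} h"
    using d DERIV_continuous continuous_on_eq_continuous_within by (metis atLeast_iff)
  have cont1: "continuous_on {0..t1} h" using continuous_on_subset[OF cont] by auto
  define S where "S = {t \<in> {0..t1}. c \<le> h t}"
  have Sne: "t1 \<in> S" using t1 c by (auto simp: S_def)
  have Scl: "closed S" unfolding S_def
    by (rule continuous_on_closed_Collect_le[OF continuous_on_const cont1]) simp
  have bdd: "bdd_below S" by (auto simp: S_def bdd_below_def)
  define s where "s = Inf S"
  have sS: "s \<in> S" unfolding s_def using closed_contains_Inf[OF _ bdd Scl] Sne by blast
  have smin: "\<And>u. u \<in> S \<Longrightarrow> s \<le> u" unfolding s_def using bdd by (simp add: cInf_lower)
  have s0: "0 \<le> s" "s \<le> t1" "c \<le> h s" using sS by (auto simp: S_def)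
  have conts: "continuous_on {0..s} h" using continuous_on_subset[OF cont1, of "{0..s}"] s0 by auto
  obtain u where u: "0 \<le> u" "u \<le> s" "h u = c"
    using IVT'[of h 0 c s, OF _ _ _ conts] s0 c by force
  hence "u \<in> S" using s0 by (auto simp: S_def)
  hence us: "u = s" using smin u by force
  have below: "h v < R" if v: "0 \<le> v" "v \<le> s" for v
  proof (cases "v = s")
    case True thus ?thesis using u us c by simp
  next
    case False
    hence "v < s" using v by simp
    hence "v \<notin> S" using smin by force
    thus ?thesis using v s0 c by (auto simp: S_def)
  qed
  have dd: "(h has_real_derivative - W t) (at t within {0..s})" if "0 \<le> t" "t \<le> s" for t
    using DERIV_subset[OF d[of t]] that by auto
  obtain \<xi> where xi: "\<xi> \<in> {0..s}" "h s - h 0 = - W \<xi> * (s - 0)"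
    using mvt_W[of 0 s h W, OF _ dd] s0 by auto
  have "0 \<le> W \<xi>" using Wnn below xi(1) by auto
  hence "0 \<le> W \<xi> * s" using s0 by simp
  hence "h s \<le> h 0" using xi by simp
  thus False using u us c by simp
qed

lemma mono_core2:
  fixes h W :: "real \<Rightarrow> real"
  assumes d: "\<And>t. t \<ge> 0 \<Longrightarrow> (h has_real_derivative - W t) (at t within {0..})"
    and Wnn: "\<And>t. t \<ge> 0 \<Longrightarrow> 0 \<le> W t" and st: "0 \<le> s" "s \<le> t"
  shows "h t \<le> h s"
proof -
  have dd: "(h has_real_derivative - W u) (at u within {s..t})" if "s \<le> u" "u \<le> t" for u
    using DERIV_subset[OF d[of u]] that st by auto
  obtain \<xi> where xi: "\<xi> \<in> {s..t}" "h t - h s = - W \<xi> * (t - s)"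
    using mvt_W[of s t h W, OF _ dd] st by auto
  have "0 \<le> W \<xi>" using Wnn xi(1) st by auto
  hence "0 \<le> W \<xi> * (t - s)" using st by simp
  thus ?thesis using xi by simp
qed

lemma decay_core:
  fixes h W :: "real \<Rightarrow> real"
  assumes d: "\<And>t. t \<ge> 0 \<Longrightarrow> (h has_real_derivative - W t) (at t within {0..})"
    and Wnn: "\<And>t. t \<ge> 0 \<Longrightarrow> 0 \<le> W t" and hnn: "\<And>t. t \<ge> 0 \<Longrightarrow> 0 \<le> h t"
    and Wpos: "\<And>\<eta>. \<eta> > 0 \<Longrightarrow> \<exists>w>0. \<forall>t\<ge>0. \<eta> \<le> h t \<longrightarrow> w \<le> W t"
  shows "(h \<longlongrightarrow> 0) at_top"
proof (rule tendstoI)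
  fix e :: real assume e: "e > 0"
  obtain w where w: "w > 0" "\<forall>t\<ge>0. e \<le> h t \<longrightarrow> w \<le> W t" using Wpos[OF e] by blast
  have "\<exists>T\<ge>0. h T < e"
  proof (rule ccontr)
    assume "\<not> ?thesis"
    hence all: "\<forall>t\<ge>0. e \<le> h t" by force
    define t where "t = (h 0 + 1) / w"
    have t0: "0 \<le> t" using hnn[of 0] w by (simp add: t_def)
    have dd: "(h has_real_derivative - W u) (at u within {0..t})" if "0 \<le> u" "u \<le> t" for u
      using DERIV_subset[OF d[of u]] that by auto
    obtain \<xi> where xi: "\<xi> \<in> {0..t}" "h t - h 0 = - W \<xi> * (t - 0)"
      using mvt_W[of 0 t h W, OF _ dd] t0 by auto
    have "w \<le> W \<xi>" using w all xi(1) by auto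
    hence "w * t \<le> W \<xi> * t" using t0 by (simp add: mult_right_mono)
    moreover have "w * t = h 0 + 1" using w by (simp add: t_def)
    ultimately have "h t \<le> -1" using xi by simp
    thus False using hnn[OF t0] by simp
  qed
  then obtain T where T: "T \<ge> 0" "h T < e" by blast
  have "\<forall>t\<ge>T. dist (h t) 0 < e"
  proof (intro allI impI)
    fix t assume "T \<le> t"
    hence "h t \<le> h T" using mono_core2[OF d Wnn] T by blast
    thus "dist (h t) 0 < e" using hnn[of t] T \<open>T \<le> t\<close> by simp
  qed
  thus "\<forall>\<^sub>F t in at_top. dist (h t) 0 < e" using eventually_at_top_linorder by blast
qed


definition Wf :: "('n::finite \<times> 'n) set \<Rightarrow> ('n \<times> 'n \<Rightarrow> 't) \<Rightarrow> ('t \<Rightarrow> real \<Rightarrow> real) \<Rightarrow> real^'n \<Rightarrow> real" where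
  "Wf E ty \<phi> y = (\<Sum>p\<in>E. (y$fst p - y$snd p) * \<phi> (ty p) (y$fst p - y$snd p))"

lemma sum_edges:
  fixes E :: "('n::finite \<times> 'n) set"
  shows "(\<Sum>c\<in>UNIV. \<Sum>d\<in>{d. (d, c) \<in> E}. f d c) = (\<Sum>p\<in>E. f (fst p) (snd p))"
proof -
  have "(\<Sum>c\<in>UNIV. \<Sum>d\<in>{d. (d, c) \<in> E}. f d c) = (\<Sum>(c,d)\<in>Sigma UNIV (\<lambda>c. {d. (d, c) \<in> E}). f d c)"
    by (rule sum.Sigma) auto
  also have "Sigma UNIV (\<lambda>c. {d. (d, c) \<in> E}) = prod.swap ` E" by force
  also have "(\<Sum>(c,d)\<in>prod.swap ` E. f d c) = (\<Sum>p\<in>E. f (fst p) (snd p))"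
    by (subst sum.reindex) (auto simp: case_prod_beta)
  finally show ?thesis .
qed

lemma swap_sum:
  assumes "bidirected E ty"
  shows "(\<Sum>p\<in>E. g p) = (\<Sum>p\<in>E. g (prod.swap p))"
proof -
  have "prod.swap ` E = E" using assms unfolding bidirected_def by force
  hence "(\<Sum>p\<in>E. g p) = (\<Sum>p\<in>prod.swap ` E. g p)" by simp
  also have "\<dots> = (\<Sum>p\<in>E. g (prod.swap p))" by (subst sum.reindex) auto
  finally show ?thesis .
qed

lemma field_comp:
  assumes "bidirected E ty"
  shows "diff_field E ty \<phi> y $ c = (\<Sum>d\<in>{d. (d, c) \<in> E}. \<phi> (ty (d, c)) (y$d - y$c))"
  using assms unfolding diff_field_def bidirected_def by (auto intro!: sum.cong)

lemma psi_swap: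
  fixes \<phi> :: "'t \<Rightarrow> real \<Rightarrow> real" and y :: "real^'n"
  assumes bid: "bidirected E ty" and odd: "\<forall>\<xi>\<in>ty ` E. \<forall>\<alpha>. \<phi> \<xi> (- \<alpha>) = - \<phi> \<xi> \<alpha>"
    and p: "p \<in> E"
  shows "\<phi> (ty (prod.swap p)) (y $ snd p - y $ fst p)
       = - \<phi> (ty p) (y $ fst p - y $ snd p)"
proof -
  obtain a b where ab: "p = (a, b)" by force
  have "ty (b, a) = ty (a, b)" using bid p ab unfolding bidirected_def by auto
  moreover have "y $ b - y $ a = - (y $ a - y $ b)" by simp
  ultimately show ?thesis using odd p ab by (metis image_eqI prod.swap_def fst_conv snd_conv)
qed

lemma field_sum:
  fixes E :: "('n::finite \<times> 'n) set"
  assumes bid: "bidirected E ty" and odd: "\<forall>\<xi>\<in>ty ` E. \<forall>\<alpha>. \<phi> \<xi> (- \<alpha>) = - \<phi> \<xi> \<alpha>"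
  shows "(\<Sum>c\<in>UNIV. diff_field E ty \<phi> y $ c) = 0"
proof -
  define S where "S = (\<Sum>p\<in>E. \<phi> (ty p) (y $ fst p - y $ snd p))"
  have "(\<Sum>c\<in>UNIV. diff_field E ty \<phi> y $ c) = S"
    unfolding field_comp[OF bid] S_def
    using sum_edges[of "\<lambda>d c. \<phi> (ty (d,c)) (y$d - y$c)" E] by simp
  moreover have "S = - S" unfolding S_def
    by (subst swap_sum[OF bid]) (simp add: psi_swap[OF bid odd] sum_negf)
  ultimately show ?thesis by simp
qed

lemma field_dot:
  fixes E :: "('n::finite \<times> 'n) set"
  assumes bid: "bidirected E ty" and odd: "\<forall>\<xi>\<in>ty ` E. \<forall>\<alpha>. \<phi> \<xi> (- \<alpha>) = - \<phi> \<xi> \<alpha>"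
  shows "(\<Sum>c\<in>UNIV. y $ c * diff_field E ty \<phi> y $ c) = - Wf E ty \<phi> y / 2"
proof -
  define S where "S = (\<Sum>p\<in>E. y $ snd p * \<phi> (ty p) (y $ fst p - y $ snd p))"
  have "(\<Sum>c\<in>UNIV. y $ c * diff_field E ty \<phi> y $ c) = S"
    unfolding field_comp[OF bid] S_def sum_distrib_left
    using sum_edges[of "\<lambda>d c. y $ c * \<phi> (ty (d,c)) (y$d - y$c)" E] by simp
  moreover have S2: "S = (\<Sum>p\<in>E. - (y $ fst p * \<phi> (ty p) (y $ fst p - y $ snd p)))" unfolding S_def
    by (subst swap_sum[OF bid]) (simp add: psi_swap[OF bid odd])
  ultimately have "2 * (\<Sum>c\<in>UNIV. y $ c * diff_field E ty \<phi> y $ c) = S + S" by simp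
  also have "\<dots> = - Wf E ty \<phi> y"
    unfolding Wf_def 
    by (subst (2) S2) (simp add: S_def sum.distrib[symmetric] sum_negf[symmetric] algebra_simps)
  finally show ?thesis by simp
qed


lemma norm_eq: "norm (y::real^'n) = sqrt (\<Sum>c\<in>UNIV. (y$c)^2)"
  by (simp add: norm_vec_def L2_set_def)

lemma dist_const: "dist (z::real^'n) (\<chi> i. m) = sqrt (\<Sum>c\<in>UNIV. (z$c - m)^2)"
  by (simp add: dist_norm norm_eq)

lemma const_in_sync: "(\<chi> i. m) \<in> sync_space"
  by (simp add: sync_space_def)

lemma infdist_upper: "infdist (z::real^'n) sync_space \<le> sqrt (\<Sum>c\<in>UNIV. (z$c - m)^2)"
proof -
  have "(\<chi> i. m) \<in> (sync_space :: (real^'n) set)" by (rule const_in_sync)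
  from infdist_le[OF this, of z] show ?thesis using dist_const[of z m] by simp
qed

definition avg :: "real^'n::finite \<Rightarrow> real" where
  "avg z = (\<Sum>c\<in>UNIV. z$c) / real CARD('n)"

lemma avg_sum: "(\<Sum>c\<in>UNIV. (z::real^'n::finite)$c - avg z) = 0"
  by (simp add: sum_subtractf avg_def)

lemma var_min: "(\<Sum>c\<in>UNIV. ((z::real^'n::finite)$c - avg z)^2) \<le> (\<Sum>c\<in>UNIV. (z$c - s)^2)"
proof -
  have "(\<Sum>c\<in>UNIV. (z$c - s)^2) = (\<Sum>c\<in>UNIV. (z$c - avg z)^2 + 2*(avg z - s)*(z$c - avg z) + (avg z - s)^2)"
    by (rule sum.cong) (auto simp: power2_eq_square algebra_simps)
  also have "\<dots> = (\<Sum>c\<in>UNIV. (z$c - avg z)^2) + 2*(avg z - s)*(\<Sum>c\<in>UNIV. z$c - avg z) + real CARD('n) * (avg z - s)^2"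
    by (simp add: sum.distrib sum_distrib_left)
  also have "\<dots> = (\<Sum>c\<in>UNIV. (z$c - avg z)^2) + real CARD('n) * (avg z - s)^2"
    using avg_sum[of z] by simp
  finally show ?thesis by simp
qed

lemma infdist_lower: "sqrt (\<Sum>c\<in>UNIV. ((z::real^'n::finite)$c - avg z)^2) \<le> infdist z sync_space"
proof -
  have ne: "sync_space \<noteq> ({} :: (real^'n) set)" using const_in_sync by blast
  have "sqrt (\<Sum>c\<in>UNIV. (z$c - avg z)^2) \<le> dist z a" if a: "a \<in> sync_space" for a
  proof -
    obtain c0 :: 'n where True by blast
    have "a = (\<chi> i. a $ c0)" using a by (simp add: sync_space_def vec_eq_iff)
    hence "dist z a = sqrt (\<Sum>c\<in>UNIV. (z$c - a$c0)^2)" using dist_const by metis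
    thus ?thesis using var_min[of z "a$c0"] by simp
  qed
  thus ?thesis unfolding infdist_notempty[OF ne] by (intro cINF_greatest ne) auto
qed

lemma term_nonneg:
  fixes \<phi> :: "'t \<Rightarrow> real \<Rightarrow> real" and \<alpha> :: real
  assumes sign: "\<forall>\<xi>\<in>ty ` E. \<forall>\<alpha>. \<alpha> \<noteq> 0 \<and> \<bar>\<alpha>\<bar> < \<epsilon> \<longrightarrow> \<alpha> * \<phi> \<xi> \<alpha> > 0"
    and p: "p \<in> E" and a: "\<bar>\<alpha>\<bar> < \<epsilon>"
  shows "0 \<le> \<alpha> * \<phi> (ty p) \<alpha>"
  using sign p a by (cases "\<alpha> = 0") (auto simp: less_imp_le)

definition good :: "('n \<times> 'n) set \<Rightarrow> real \<Rightarrow> real^'n \<Rightarrow> bool" where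
  "good E \<epsilon> y \<longleftrightarrow> (\<forall>(d, c)\<in>E. \<bar>y $ d - y $ c\<bar> < \<epsilon>)"

lemma Wf_nonneg:
  fixes E :: "('n::finite \<times> 'n) set"
  assumes sign: "\<forall>\<xi>\<in>ty ` E. \<forall>\<alpha>. \<alpha> \<noteq> 0 \<and> \<bar>\<alpha>\<bar> < \<epsilon> \<longrightarrow> \<alpha> * \<phi> \<xi> \<alpha> > 0"
    and g: "good E \<epsilon> y"
  shows "0 \<le> Wf E ty \<phi> y"
  unfolding Wf_def
proof (rule sum_nonneg)
  fix p assume p: "p \<in> E"
  hence "\<bar>y $ fst p - y $ snd p\<bar> < \<epsilon>" using g by (auto simp: good_def)
  thus "0 \<le> (y $ fst p - y $ snd p) * \<phi> (ty p) (y $ fst p - y $ snd p)"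
    using term_nonneg[OF sign p] by blast
qed

lemma Wf_pos:
  fixes E :: "('n::finite \<times> 'n) set"
  assumes conn: "connected_network E"
    and sign: "\<forall>\<xi>\<in>ty ` E. \<forall>\<alpha>. \<alpha> \<noteq> 0 \<and> \<bar>\<alpha>\<bar> < \<epsilon> \<longrightarrow> \<alpha> * \<phi> \<xi> \<alpha> > 0"
    and g: "good E \<epsilon> y" and s0: "(\<Sum>c\<in>UNIV. y$c) = 0" and s2: "0 < (\<Sum>c\<in>UNIV. (y$c)^2)"
  shows "0 < Wf E ty \<phi> y"
proof -
  have "\<exists>p\<in>E. y $ fst p \<noteq> y $ snd p"
  proof (rule ccontr)
    assume "\<not> ?thesis"
    hence eqE: "\<forall>p\<in>E. y $ fst p = y $ snd p" by blast
    obtain c0 :: 'n where True by blast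
    have "y $ a = y $ b" if "(a, b) \<in> (E \<union> E\<inverse>)\<^sup>*" for a b
      using that
    proof (induction rule: rtrancl_induct)
      case base then show ?case by simp
    next
      case (step u v) then show ?case using eqE by force
    qed
    hence all: "\<And>c. y $ c = y $ c0" using conn unfolding connected_network_def by metis
    have "(\<Sum>c\<in>UNIV. y$c) = (\<Sum>c\<in>(UNIV::'n set). y$c0)" by (rule sum.cong) (auto intro: all)
    hence "(\<Sum>c\<in>UNIV. y$c) = real CARD('n) * y $ c0" by simp
    hence "y $ c0 = 0" using s0 by simp
    hence "(\<Sum>c\<in>UNIV. (y$c)^2) = 0" using all by (metis power_zero_numeral sum.neutral)
    thus False using s2 by simp
  qed
  then obtain p where p: "p \<in> E" "y $ fst p \<noteq> y $ snd p" by blast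
  show ?thesis unfolding Wf_def
  proof (rule sum_pos2[OF _ p(1)])
    show "finite E" by simp
    have "\<bar>y $ fst p - y $ snd p\<bar> < \<epsilon>" using g p by (auto simp: good_def)
    thus "0 < (y $ fst p - y $ snd p) * \<phi> (ty p) (y $ fst p - y $ snd p)"
      using sign p by auto
  next
    fix q assume q: "q \<in> E"
    hence "\<bar>y $ fst q - y $ snd q\<bar> < \<epsilon>" using g by (auto simp: good_def)
    thus "0 \<le> (y $ fst q - y $ snd q) * \<phi> (ty q) (y $ fst q - y $ snd q)"
      using term_nonneg[OF sign q] by blast
  qed
qed

lemma Wf_cont:
  fixes E :: "('n::finite \<times> 'n) set"
  assumes C1: "\<forall>\<xi>\<in>ty ` E. \<phi> \<xi> C1_differentiable_on UNIV"
  shows "continuous_on UNIV (Wf E ty \<phi>)"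
proof -
  have pc: "continuous_on UNIV (\<phi> (ty p))" if "p \<in> E" for p
  proof -
    have "\<forall>x. \<phi> (ty p) differentiable at x" using C1 that by (auto simp: C1_differentiable_on_eq)
    thus ?thesis by (simp add: differentiable_imp_continuous_on differentiable_on_def differentiable_at_withinI)
  qed
  show ?thesis unfolding Wf_def
    by (intro continuous_on_sum continuous_on_mult continuous_intros
        continuous_on_compose2[OF pc, of _ UNIV] ) auto
qed

lemma Wf_shift: "Wf E ty \<phi> (y - (\<chi> i. m)) = Wf E ty \<phi> y"
  by (simp add: Wf_def)


lemma traj:
  fixes E :: "('n::finite \<times> 'n) set" and \<phi> :: "'t \<Rightarrow> real \<Rightarrow> real" and x :: "real \<Rightarrow> real^'n"
  assumes conn: "connected_network E" and bid: "bidirected E ty"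
    and odd: "\<forall>\<xi>\<in>ty ` E. \<forall>\<alpha>. \<phi> \<xi> (- \<alpha>) = - \<phi> \<xi> \<alpha>"
    and C1: "\<forall>\<xi>\<in>ty ` E. \<phi> \<xi> C1_differentiable_on UNIV"
    and sign: "\<forall>\<xi>\<in>ty ` E. \<forall>\<alpha>. \<alpha> \<noteq> 0 \<and> \<bar>\<alpha>\<bar> < \<epsilon> \<longrightarrow> \<alpha> * \<phi> \<xi> \<alpha> > 0"
    and sol: "\<forall>t\<ge>0. (x has_vector_derivative diff_field E ty \<phi> (x t)) (at t within {0..})"
    and reg: "\<forall>z m. (\<Sum>c\<in>UNIV. (z$c - m)^2) < R \<longrightarrow> good E \<epsilon> z"
    and h0: "(\<Sum>c\<in>UNIV. (x 0$c - avg (x 0))^2) < R"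
  shows "\<forall>t\<ge>0. infdist (x t) sync_space \<le> sqrt (\<Sum>c\<in>UNIV. (x 0$c - avg (x 0))^2)"
    and "((\<lambda>t. infdist (x t) sync_space) \<longlongrightarrow> 0) at_top"
proof -
  define F where "F = diff_field E ty \<phi>"
  define m where "m = avg (x 0)"
  define h where "h t = (\<Sum>c\<in>UNIV. (x t $ c - m)^2)" for t
  define W where "W t = Wf E ty \<phi> (x t)" for t
  have cd: "((\<lambda>t. x t $ c) has_real_derivative (F (x t) $ c)) (at t within {0..})" if "t \<ge> 0" for t c
    using comp_deriv sol that unfolding F_def by blast
  have dM: "((\<lambda>t. \<Sum>c\<in>UNIV. x t $ c) has_real_derivative 0) (at t within {0..})" if "t \<ge> 0" for t
  proof -
    have "((\<lambda>t. \<Sum>c\<in>UNIV. x t $ c) has_real_derivative (\<Sum>c\<in>UNIV. F (x t) $ c)) (at t within {0..})"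
      by (rule DERIV_sum) (use cd that in auto)
    thus ?thesis using field_sum[OF bid odd] unfolding F_def by simp
  qed
  obtain k where "\<forall>t\<in>{0..}. (\<Sum>c\<in>UNIV. x t $ c) = k"
    using has_field_derivative_zero_constant[of "{0::real..}", OF _ dM] by auto
  hence Mc: "(\<Sum>c\<in>UNIV. x t $ c) = (\<Sum>c\<in>UNIV. x 0 $ c)" if "t \<ge> 0" for t using that by auto
  have S0: "(\<Sum>c\<in>UNIV. x t $ c - m) = 0" if "t \<ge> 0" for t
    using Mc[OF that] avg_sum[of "x 0"] unfolding m_def by (simp add: sum_subtractf)
  have dh: "(h has_real_derivative - W t) (at t within {0..})" if t: "t \<ge> 0" for t
  proof -
    have "(h has_real_derivative (\<Sum>c\<in>UNIV. 2 * (x t $ c - m) * F (x t) $ c)) (at t within {0..})"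
      unfolding h_def
      by (rule DERIV_sum) (auto intro!: derivative_eq_intros cd t)
    moreover have "(\<Sum>c\<in>UNIV. 2 * (x t $ c - m) * F (x t) $ c)
        = 2 * (\<Sum>c\<in>UNIV. x t $ c * F (x t) $ c) - 2 * m * (\<Sum>c\<in>UNIV. F (x t) $ c)"
      by (simp add: sum_distrib_left sum_subtractf[symmetric] algebra_simps)
    moreover have "\<dots> = - W t"
      using field_sum[OF bid odd] field_dot[OF bid odd] unfolding F_def W_def by simp
    ultimately show ?thesis by simp
  qed
  have Wnn0: "0 \<le> W t" if "t \<ge> 0" "h t < R" for t
    using reg that Wf_nonneg[OF sign] unfolding h_def W_def by blast
  have hR: "\<forall>t\<ge>0. h t < R"
    by (rule mono_core[OF dh _ Wnn0]) (use h0 in \<open>auto simp: h_def m_def\<close>)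
  have Wnn: "0 \<le> W t" if "t \<ge> 0" for t using Wnn0 hR that by blast
  have hle: "h t \<le> h 0" if "t \<ge> 0" for t using mono_core2[OF dh Wnn] that by blast
  have hnn: "0 \<le> h t" for t unfolding h_def by (simp add: sum_nonneg)
  have idle: "infdist (x t) sync_space \<le> sqrt (h t)" for t
    unfolding h_def by (rule infdist_upper)
  show "\<forall>t\<ge>0. infdist (x t) sync_space \<le> sqrt (\<Sum>c\<in>UNIV. (x 0$c - avg (x 0))^2)"
  proof (intro allI impI)
    fix t :: real assume "t \<ge> 0"
    hence "sqrt (h t) \<le> sqrt (h 0)" using hle by simp
    hence "infdist (x t) sync_space \<le> sqrt (h 0)" using idle[of t] by linarith
    thus "infdist (x t) sync_space \<le> sqrt (\<Sum>c\<in>UNIV. (x 0$c - avg (x 0))^2)"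
      unfolding h_def m_def by simp
  qed
  have Wpos: "\<exists>w>0. \<forall>t\<ge>0. \<eta> \<le> h t \<longrightarrow> w \<le> W t" if eta: "\<eta> > 0" for \<eta>
  proof -
    define K where "K = {y::real^'n. (\<Sum>c\<in>UNIV. y$c) = 0 \<and> \<eta> \<le> (\<Sum>c\<in>UNIV. (y$c)^2) \<and> (\<Sum>c\<in>UNIV. (y$c)^2) \<le> h 0}"
    have inK: "x t - (\<chi> i. m) \<in> K" if "t \<ge> 0" "\<eta> \<le> h t" for t
      using that S0[of t] hle[of t] unfolding K_def h_def by simp
    have WK: "W t = Wf E ty \<phi> (x t - (\<chi> i. m))" for t unfolding W_def by (simp add: Wf_shift)
    show ?thesis
    proof (cases "K = {}")
      case True
      thus ?thesis using inK by (intro exI[of _ 1]) auto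
    next
      case False
      have clK: "closed K" unfolding K_def
        by (intro closed_Collect_conj closed_Collect_eq closed_Collect_le continuous_intros)
      have bK: "bounded K" unfolding bounded_iff
      proof (intro exI ballI)
        fix y assume "y \<in> K"
        thus "norm y \<le> sqrt (h 0)" unfolding K_def norm_eq by simp
      qed
      have cK: "compact K" using clK bK compact_eq_bounded_closed by blast
      obtain y0 where y0: "y0 \<in> K" "\<forall>y\<in>K. Wf E ty \<phi> y0 \<le> Wf E ty \<phi> y"
        using continuous_attains_inf[OF cK False continuous_on_subset[OF Wf_cont[OF C1]]] by blast
      have "good E \<epsilon> y0"
        using reg[rule_format, of y0 0] y0(1) h0 hle[of 0] unfolding K_def h_def m_def by simp
      hence "0 < Wf E ty \<phi> y0"
        using Wf_pos[OF conn sign] y0(1) eta unfolding K_def by auto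
      thus ?thesis using y0 inK WK by (intro exI[of _ "Wf E ty \<phi> y0"]) auto
    qed
  qed
  have "(h \<longlongrightarrow> 0) at_top" by (rule decay_core[OF dh Wnn hnn Wpos])
  hence "((\<lambda>t. sqrt (h t)) \<longlongrightarrow> 0) at_top" using tendsto_real_sqrt by fastforce
  thus "((\<lambda>t. infdist (x t) sync_space) \<longlongrightarrow> 0) at_top"
    by (rule tendsto_sandwich[rotated 2, OF tendsto_const]) (auto simp: idle infdist_nonneg)
qed


lemma sqrt_lt1: "0 < (r::real) \<Longrightarrow> a < r^2 \<Longrightarrow> sqrt a < r"
  by (metis abs_of_pos real_sqrt_abs real_sqrt_less_mono)

lemma sqrt_lt2: "0 \<le> (a::real) \<Longrightarrow> sqrt a < r \<Longrightarrow> a < r^2"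
  by (metis real_sqrt_ge_zero real_sqrt_pow2 power_strict_mono zero_less_numeral)

lemma reg_stab:
  fixes E :: "('n::finite \<times> 'n) set"
  assumes "0 < \<epsilon>"
  shows "\<forall>z m. (\<Sum>c\<in>UNIV. ((z::real^'n)$c - m)^2) < (\<epsilon>/2)^2 \<longrightarrow> good E \<epsilon> z"
proof (intro allI impI)
  fix z :: "real^'n" and m assume a: "(\<Sum>c\<in>UNIV. (z$c - m)^2) < (\<epsilon>/2)^2"
  have b: "\<bar>z$i - m\<bar> < \<epsilon>/2" for i
  proof -
    have "(z$i - m)^2 \<le> (\<Sum>c\<in>UNIV. (z$c - m)^2)" by (rule member_le_sum) auto
    hence "(z$i - m)^2 < (\<epsilon>/2)^2" using a by linarith
    thus ?thesis using power2_less_imp_less[of "\<bar>z$i - m\<bar>" "\<epsilon>/2"] assms by simp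
  qed
  show "good E \<epsilon> z" unfolding good_def
  proof (intro ballI, clarify)
    fix d c assume "(d, c) \<in> E"
    show "\<bar>z $ d - z $ c\<bar> < \<epsilon>" using b[of d] b[of c] by linarith
  qed
qed

theorem theorem5p1:
  fixes E :: "('n::finite \<times> 'n) set"
    and ty :: "'n \<times> 'n \<Rightarrow> 't"
    and \<phi> :: "'t \<Rightarrow> real \<Rightarrow> real"
    and \<epsilon> :: real
  assumes "no_loops E"
    and "connected_network E"
    and "homogeneous E ty"
    and "bidirected E ty"
    and odd: "\<forall>\<xi>\<in>ty ` E. \<forall>\<alpha>. \<phi> \<xi> (- \<alpha>) = - \<phi> \<xi> \<alpha>"
    and C1: "\<forall>\<xi>\<in>ty ` E. \<phi> \<xi> C1_differentiable_on UNIV"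
    and "\<epsilon> > 0"
    and sign: "\<forall>\<xi>\<in>ty ` E. \<forall>\<alpha>. \<alpha> \<noteq> 0 \<and> \<bar>\<alpha>\<bar> < \<epsilon> \<longrightarrow> \<alpha> * \<phi> \<xi> \<alpha> > 0"
  shows "(\<forall>x\<in>sync_space. diff_field E ty \<phi> x = 0)
     \<and> asymptotically_stable_on (diff_field E ty \<phi>) sync_space (max_cylinder E \<epsilon>)"
proof (intro conjI)
  note conn = assms(2) and bid = assms(4) and eps = assms(7)
  show "\<forall>x\<in>sync_space. diff_field E ty \<phi> x = 0"
  proof
    fix x :: "real^'n" assume x: "x \<in> sync_space"
    have z: "\<phi> (ty p) 0 = 0" if "p \<in> E" for p
    proof -
      have "\<phi> (ty p) (- 0) = - \<phi> (ty p) 0" using odd that by blast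
      thus ?thesis by simp
    qed
    show "diff_field E ty \<phi> x = 0"
    proof -
      have xx: "x $ a - x $ b = 0" for a b using x by (simp add: sync_space_def)
      show ?thesis unfolding vec_eq_iff field_comp[OF bid] using z by (auto simp: xx intro!: sum.neutral)
    qed
  qed
  have L: "\<forall>e>0. \<exists>\<delta>>0. \<forall>x. (\<forall>t\<ge>0. (x has_vector_derivative diff_field E ty \<phi> (x t)) (at t within {0..})) \<longrightarrow>
        infdist (x 0) sync_space < \<delta> \<longrightarrow> (\<forall>t\<ge>0. infdist (x t) sync_space < e)"
  proof (intro allI impI)
    fix e :: real assume e: "e > 0"
    show "\<exists>\<delta>>0. \<forall>x. (\<forall>t\<ge>0. (x has_vector_derivative diff_field E ty \<phi> (x t)) (at t within {0..})) \<longrightarrow>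
        infdist (x 0) sync_space < \<delta> \<longrightarrow> (\<forall>t\<ge>0. infdist (x t) sync_space < e)"
    proof -
     have "\<forall>x. (\<forall>t\<ge>0. (x has_vector_derivative diff_field E ty \<phi> (x t)) (at t within {0..})) \<longrightarrow>
        infdist (x 0) sync_space < min e (\<epsilon>/2) \<longrightarrow> (\<forall>t\<ge>0. infdist (x t) sync_space < e)"
     proof (intro allI impI)
      fix x :: "real \<Rightarrow> real^'n" and t :: real
      assume sol: "\<forall>t\<ge>0. (x has_vector_derivative diff_field E ty \<phi> (x t)) (at t within {0..})"
        and i0: "infdist (x 0) sync_space < min e (\<epsilon>/2)" and t: "0 \<le> t"
      define h0 where "h0 = (\<Sum>c\<in>UNIV. (x 0$c - avg (x 0))^2)"
      have sh: "sqrt h0 < min e (\<epsilon>/2)" using infdist_lower[of "x 0"] i0 unfolding h0_def by linarith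
      have "h0 < (\<epsilon>/2)^2" using sqrt_lt2[of h0 "\<epsilon>/2"] sh unfolding h0_def by (simp add: sum_nonneg)
      hence "\<forall>t\<ge>0. infdist (x t) sync_space \<le> sqrt h0"
        using traj(1)[OF conn bid odd C1 sign sol reg_stab[OF eps]] unfolding h0_def by blast
      thus "infdist (x t) sync_space < e" using t sh by force
     qed
     thus ?thesis using e eps by (intro exI[of _ "min e (\<epsilon>/2)"]) auto
    qed
  qed
  have C: "\<forall>x. (\<forall>t\<ge>0. (x has_vector_derivative diff_field E ty \<phi> (x t)) (at t within {0..})) \<longrightarrow> x 0 \<in> max_cylinder E \<epsilon> \<longrightarrow>
        ((\<lambda>t. infdist (x t) sync_space) \<longlongrightarrow> 0) at_top"
  proof (intro allI impI)
    fix x :: "real \<Rightarrow> real^'n"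
    assume sol: "\<forall>t\<ge>0. (x has_vector_derivative diff_field E ty \<phi> (x t)) (at t within {0..})"
      and x0: "x 0 \<in> max_cylinder E \<epsilon>"
    obtain r where r: "r > 0" "\<forall>x\<in>cylinder r. \<forall>(c, d)\<in>E. \<bar>x $ d - x $ c\<bar> < \<epsilon>"
      "x 0 \<in> cylinder r"
      using x0 unfolding max_cylinder_def by blast
    have reg: "\<forall>z m. (\<Sum>c\<in>UNIV. ((z::real^'n)$c - m)^2) < r^2 \<longrightarrow> good E \<epsilon> z"
    proof (intro allI impI)
      fix z :: "real^'n" and m assume "(\<Sum>c\<in>UNIV. (z$c - m)^2) < r^2"
      hence "sqrt (\<Sum>c\<in>UNIV. (z$c - m)^2) < r" using sqrt_lt1 r(1) by blast
      hence "z \<in> cylinder r" using infdist_upper[of z m] unfolding cylinder_def by simp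
      hence "\<forall>(c, d)\<in>E. \<bar>z $ d - z $ c\<bar> < \<epsilon>" using r(2) by blast
      thus "good E \<epsilon> z" unfolding good_def by (force simp: abs_minus_commute)
    qed
    have "sqrt (\<Sum>c\<in>UNIV. (x 0$c - avg (x 0))^2) < r"
      using infdist_lower[of "x 0"] r(3) unfolding cylinder_def by simp
    hence "(\<Sum>c\<in>UNIV. (x 0$c - avg (x 0))^2) < r^2" using sqrt_lt2 by (simp add: sum_nonneg)
    thus "((\<lambda>t. infdist (x t) sync_space) \<longlongrightarrow> 0) at_top"
      using traj(2)[OF conn bid odd C1 sign sol reg] by blast
  qed
show "asymptotically_stable_on (diff_field E ty \<phi>) sync_space (max_cylinder E \<epsilon>)"
    unfolding asymptotically_stable_on_def lyapunov_stable_set_def using L C by blast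
qed

end
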